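(* If all slice categories $\mathcal{C}/X$ of a category $\mathcal{C}$ have partial map classifiers, then $\mathcal{C}$ is strongly amendable.
   Context: A category is amendable if for every morphism $t_L : L \to L'$ there is a factorization $t_L = \beta \circ t_L'$ with $t_L' : L \rightarrowtail L''$ mono and $\beta : L'' \to L'$ such that for every factorization $t_L = \alpha \circ m$ with $m : L \rightarrowtail G_L$ mono and $\alpha : G_L \to L'$ there exists $\alpha' : G_L \to L''$ with $\alpha' \circ m = t_L'$ and $\beta \circ \alpha' = \alpha$. It is strongly amendable if the factorization $(t_L',\beta)$ can be chosen so that moreover, for every such $(m,\alpha)$, the corresponding $\alpha'$ can be chosen so that $L \xleftarrow{1_L} L \xrightarrow{m} G_L$ is a pullback of $L \xrightarrow{t_L'} L'' \xleftarrow{\alpha'} G_L$. *)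

theory Defs
  imports Main
begin

text \<open>Categories given explicitly: objects, arrows, domain, codomain,
  composition (cmp g f means g after f) and identities.\<close>

record ('o, 'm) cat =
  Obj :: "'o set"
  Arr :: "'m set"
  Dom :: "'m \<Rightarrow> 'o"
  Cod :: "'m \<Rightarrow> 'o"
  cmp :: "'m \<Rightarrow> 'm \<Rightarrow> 'm"
  Id  :: "'o \<Rightarrow> 'm"

definition is_category :: "('o, 'm) cat \<Rightarrow> bool" where
  "is_category C \<longleftrightarrow>
     (\<forall>f\<in>Arr C. Dom C f \<in> Obj C \<and> Cod C f \<in> Obj C) \<and>
     (\<forall>a\<in>Obj C. Id C a \<in> Arr C \<and> Dom C (Id C a) = a \<and> Cod C (Id C a) = a) \<and>
     (\<forall>f\<in>Arr C. \<forall>g\<in>Arr C. Cod C f = Dom C g \<longrightarrow>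
        cmp C g f \<in> Arr C \<and> Dom C (cmp C g f) = Dom C f \<and> Cod C (cmp C g f) = Cod C g) \<and>
     (\<forall>f\<in>Arr C. cmp C f (Id C (Dom C f)) = f \<and> cmp C (Id C (Cod C f)) f = f) \<and>
     (\<forall>f\<in>Arr C. \<forall>g\<in>Arr C. \<forall>h\<in>Arr C. Cod C f = Dom C g \<longrightarrow> Cod C g = Dom C h \<longrightarrow>
        cmp C h (cmp C g f) = cmp C (cmp C h g) f)"

definition hom :: "('o, 'm) cat \<Rightarrow> 'o \<Rightarrow> 'o \<Rightarrow> 'm set" where
  "hom C a b = {f \<in> Arr C. Dom C f = a \<and> Cod C f = b}"

definition mono :: "('o, 'm) cat \<Rightarrow> 'm \<Rightarrow> bool" where
  "mono C m \<longleftrightarrow> m \<in> Arr C \<and>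
     (\<forall>g\<in>Arr C. \<forall>h\<in>Arr C. Cod C g = Dom C m \<longrightarrow> Cod C h = Dom C m \<longrightarrow>
        Dom C g = Dom C h \<longrightarrow> cmp C m g = cmp C m h \<longrightarrow> g = h)"

definition is_pullback :: "('o, 'm) cat \<Rightarrow> 'm \<Rightarrow> 'm \<Rightarrow> 'm \<Rightarrow> 'm \<Rightarrow> bool" where
  "is_pullback C p1 p2 f g \<longleftrightarrow>
     p1 \<in> Arr C \<and> p2 \<in> Arr C \<and> f \<in> Arr C \<and> g \<in> Arr C \<and>
     Dom C p1 = Dom C p2 \<and> Cod C p1 = Dom C f \<and> Cod C p2 = Dom C g \<and> Cod C f = Cod C g \<and>
     cmp C f p1 = cmp C g p2 \<and>
     (\<forall>q1\<in>Arr C. \<forall>q2\<in>Arr C. Dom C q1 = Dom C q2 \<longrightarrow> Cod C q1 = Dom C f \<longrightarrow>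
        Cod C q2 = Dom C g \<longrightarrow> cmp C f q1 = cmp C g q2 \<longrightarrow>
        (\<exists>!u. u \<in> hom C (Dom C q1) (Dom C p1) \<and> cmp C p1 u = q1 \<and> cmp C p2 u = q2))"

definition has_partial_map_classifiers :: "('o, 'm) cat \<Rightarrow> bool" where
  "has_partial_map_classifiers C \<longleftrightarrow>
     (\<forall>Y\<in>Obj C. \<exists>T \<eta>. T \<in> Obj C \<and> \<eta> \<in> hom C Y T \<and> mono C \<eta> \<and>
        (\<forall>m f. mono C m \<longrightarrow> f \<in> hom C (Dom C m) Y \<longrightarrow>
           (\<exists>!\<chi>. \<chi> \<in> hom C (Cod C m) T \<and> is_pullback C f m \<eta> \<chi>)))"

definition slice :: "('o, 'm) cat \<Rightarrow> 'o \<Rightarrow> ('m, 'm \<times> 'm \<times> 'm) cat" where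
  "slice C X = \<lparr>
     Obj = {a \<in> Arr C. Cod C a = X},
     Arr = {(a, f, b). a \<in> Arr C \<and> Cod C a = X \<and> b \<in> Arr C \<and> Cod C b = X \<and>
              f \<in> hom C (Dom C a) (Dom C b) \<and> cmp C b f = a},
     Dom = (\<lambda>(a, f, b). a),
     Cod = (\<lambda>(a, f, b). b),
     cmp = (\<lambda>(b', g, c) (a, f, b). (a, cmp C g f, c)),
     Id = (\<lambda>a. (a, Id C (Dom C a), a)) \<rparr>"

definition strongly_amendable :: "('o, 'm) cat \<Rightarrow> bool" where
  "strongly_amendable C \<longleftrightarrow>
     (\<forall>t\<in>Arr C. \<exists>t' \<beta>. mono C t' \<and> \<beta> \<in> Arr C \<and>
        Dom C t' = Dom C t \<and> Cod C t' = Dom C \<beta> \<and> Cod C \<beta> = Cod C t \<and>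
        cmp C \<beta> t' = t \<and>
        (\<forall>m \<alpha>. mono C m \<longrightarrow> Dom C m = Dom C t \<longrightarrow>
           \<alpha> \<in> hom C (Cod C m) (Cod C t) \<longrightarrow> cmp C \<alpha> m = t \<longrightarrow>
           (\<exists>\<alpha>'. \<alpha>' \<in> hom C (Cod C m) (Cod C t') \<and> cmp C \<alpha>' m = t' \<and>
                  cmp C \<beta> \<alpha>' = \<alpha> \<and>
                  is_pullback C (Id C (Dom C t)) m t' \<alpha>')))"

end

theory Submission
  imports Defs
begin

lemma slice_simps:
  "Obj (slice C X) = {a \<in> Arr C. Cod C a = X}"
  "(a, f, b) \<in> Arr (slice C X) \<longleftrightarrow> a \<in> Arr C \<and> Cod C a = X \<and> b \<in> Arr C \<and> Cod C b = X \<and>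
              f \<in> hom C (Dom C a) (Dom C b) \<and> cmp C b f = a"
  "Dom (slice C X) (a, f, b) = a"
  "Cod (slice C X) (a, f, b) = b"
  "cmp (slice C X) (b', g, c) (a, f, b) = (a, cmp C g f, c)"
  "Id (slice C X) a = (a, Id C (Dom C a), a)"
  by (simp_all add: slice_def)

lemma cat_facts:
  assumes "is_category C"
  shows "\<And>f. f \<in> Arr C \<Longrightarrow> Dom C f \<in> Obj C \<and> Cod C f \<in> Obj C"
    and "\<And>a. a \<in> Obj C \<Longrightarrow> Id C a \<in> Arr C \<and> Dom C (Id C a) = a \<and> Cod C (Id C a) = a"
    and "\<And>f g. f \<in> Arr C \<Longrightarrow> g \<in> Arr C \<Longrightarrow> Cod C f = Dom C g \<Longrightarrow>
        cmp C g f \<in> Arr C \<and> Dom C (cmp C g f) = Dom C f \<and> Cod C (cmp C g f) = Cod C g"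
    and "\<And>f. f \<in> Arr C \<Longrightarrow> cmp C f (Id C (Dom C f)) = f \<and> cmp C (Id C (Cod C f)) f = f"
    and "\<And>f g h. f \<in> Arr C \<Longrightarrow> g \<in> Arr C \<Longrightarrow> h \<in> Arr C \<Longrightarrow> Cod C f = Dom C g \<Longrightarrow> Cod C g = Dom C h \<Longrightarrow>
        cmp C h (cmp C g f) = cmp C (cmp C h g) f"
  using assms unfolding is_category_def by blast+

lemma mono_slice_imp:
  assumes C: "is_category C" and M: "mono (slice C X) (a, f, b)"
  shows "mono C f"
proof -
  have A: "(a, f, b) \<in> Arr (slice C X)" using M unfolding mono_def by blast
  hence a: "a \<in> Arr C" "Cod C a = X" "b \<in> Arr C" "Cod C b = X" "f \<in> Arr C"
    "Dom C f = Dom C a" "Cod C f = Dom C b" "cmp C b f = a"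
    by (auto simp: slice_simps hom_def)
  show ?thesis unfolding mono_def
  proof (intro conjI ballI impI)
    show "f \<in> Arr C" by fact
    fix g h assume g: "g \<in> Arr C" and h: "h \<in> Arr C" and cg: "Cod C g = Dom C f"
      and ch: "Cod C h = Dom C f" and dd: "Dom C g = Dom C h" and eq: "cmp C f g = cmp C f h"
    have ag: "cmp C a g \<in> Arr C" "Dom C (cmp C a g) = Dom C g" "Cod C (cmp C a g) = Cod C a"
      using cat_facts(3)[OF C g a(1)] cg a by auto
    have ah: "cmp C a h \<in> Arr C" "Dom C (cmp C a h) = Dom C h" "Cod C (cmp C a h) = Cod C a"
      using cat_facts(3)[OF C h a(1)] ch a by auto
    have e1: "cmp C a g = cmp C b (cmp C f g)"
      using cat_facts(5)[OF C g a(5) a(3)] cg a by simp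
    have e2: "cmp C a h = cmp C b (cmp C f h)"
      using cat_facts(5)[OF C h a(5) a(3)] ch a by simp
    have eah: "cmp C a h = cmp C a g" using e1 e2 eq by simp
    let ?G = "(cmp C a g, g, a)" and ?H = "(cmp C a g, h, a)"
    have G: "?G \<in> Arr (slice C X)" using ag a g cg by (simp add: slice_simps hom_def)
    have H: "?H \<in> Arr (slice C X)" using ah a h ch eah dd by (simp add: slice_simps hom_def)
    have mp: "\<forall>g\<in>Arr (slice C X). \<forall>h\<in>Arr (slice C X). Cod (slice C X) g = Dom (slice C X) (a, f, b) \<longrightarrow>
        Cod (slice C X) h = Dom (slice C X) (a, f, b) \<longrightarrow> Dom (slice C X) g = Dom (slice C X) h \<longrightarrow>
        cmp (slice C X) (a, f, b) g = cmp (slice C X) (a, f, b) h \<longrightarrow> g = h"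
      using M unfolding mono_def by blast
    have "cmp (slice C X) (a, f, b) ?G = cmp (slice C X) (a, f, b) ?H"
      using eq by (simp add: slice_simps)
    moreover have "Cod (slice C X) ?G = Dom (slice C X) (a, f, b)" "Cod (slice C X) ?H = Dom (slice C X) (a, f, b)"
      "Dom (slice C X) ?G = Dom (slice C X) ?H" by (simp_all add: slice_simps)
    ultimately have "?G = ?H" using mp G H by blast
    thus "g = h" by simp
  qed
qed

lemma mono_C_imp_slice:
  assumes C: "is_category C" and M: "mono C m" and A: "(a, m, b) \<in> Arr (slice C X)"
  shows "mono (slice C X) (a, m, b)"
  unfolding mono_def
proof (intro conjI ballI impI)
  show "(a, m, b) \<in> Arr (slice C X)" by fact
  fix G H assume G: "G \<in> Arr (slice C X)" and H: "H \<in> Arr (slice C X)"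
    and cg: "Cod (slice C X) G = Dom (slice C X) (a, m, b)"
    and ch: "Cod (slice C X) H = Dom (slice C X) (a, m, b)"
    and dd: "Dom (slice C X) G = Dom (slice C X) H"
    and eq: "cmp (slice C X) (a, m, b) G = cmp (slice C X) (a, m, b) H"
  obtain g1 g g3 where Gd: "G = (g1, g, g3)" by (cases G) auto
  obtain h1 h h3 where Hd: "H = (h1, h, h3)" by (cases H) auto
  have am: "Dom C m = Dom C a" using A by (simp add: slice_simps hom_def)
  have gg: "g3 = a" "g \<in> Arr C" "Cod C g = Dom C a" "Dom C g = Dom C g1"
    using G cg Gd by (auto simp: slice_simps hom_def)
  have hh: "h3 = a" "h \<in> Arr C" "Cod C h = Dom C a" "Dom C h = Dom C h1"
    using H ch Hd by (auto simp: slice_simps hom_def)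
  have e1: "g1 = h1" using dd Gd Hd by (simp add: slice_simps)
  have e2: "cmp C m g = cmp C m h" using eq Gd Hd by (simp add: slice_simps)
  have "g = h" using M[unfolded mono_def] gg hh e1 e2 am by metis
  thus "G = H" using Gd Hd gg hh e1 by simp
qed

theorem proposition3:
  fixes C :: "('o, 'm) cat"
  assumes "is_category C"
    and "\<forall>X\<in>Obj C. has_partial_map_classifiers (slice C X)"
  shows "strongly_amendable C"
  unfolding strongly_amendable_def
proof
  note C = assms(1)
  fix t assume t: "t \<in> Arr C"
  define X where "X = Cod C t"
  define S where "S = slice C X"
  have XO: "X \<in> Obj C" using cat_facts(1)[OF C t] X_def by simp
  have pmc: "has_partial_map_classifiers S" using assms(2) XO S_def by blast
  have tO: "t \<in> Obj S" using t X_def S_def by (simp add: slice_simps)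
  obtain T \<eta> where T: "T \<in> Obj S" and eta: "\<eta> \<in> hom S t T" and meta: "mono S \<eta>"
    and cls: "\<And>m f. mono S m \<Longrightarrow> f \<in> hom S (Dom S m) t \<Longrightarrow>
           (\<exists>!\<chi>. \<chi> \<in> hom S (Cod S m) T \<and> is_pullback S f m \<eta> \<chi>)"
    using pmc tO unfolding has_partial_map_classifiers_def by metis
  obtain a t' b where ed: "\<eta> = (a, t', b)" by (cases \<eta>) auto
  have ab: "a = t" "b = T" using eta ed S_def by (auto simp: hom_def slice_simps)
  have tt: "T \<in> Arr C" "Cod C T = X" "t' \<in> Arr C" "Dom C t' = Dom C t" "Cod C t' = Dom C T"
      "cmp C T t' = t"
    using eta ed ab S_def by (auto simp: hom_def slice_simps)
  have mt': "mono C t'" using mono_slice_imp[OF C] meta ed S_def by blast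
  have dtO: "Dom C t \<in> Obj C" using cat_facts(1)[OF C t] by simp
  have idt: "Id C (Dom C t) \<in> Arr C" "Dom C (Id C (Dom C t)) = Dom C t" "Cod C (Id C (Dom C t)) = Dom C t"
    using cat_facts(2)[OF C dtO] by auto
  have t'id: "cmp C t' (Id C (Dom C t)) = t'" using cat_facts(4)[OF C tt(3)] tt by simp
  show "\<exists>t' \<beta>. mono C t' \<and> \<beta> \<in> Arr C \<and>
        Dom C t' = Dom C t \<and> Cod C t' = Dom C \<beta> \<and> Cod C \<beta> = Cod C t \<and>
        cmp C \<beta> t' = t \<and>
        (\<forall>m \<alpha>. mono C m \<longrightarrow> Dom C m = Dom C t \<longrightarrow>
           \<alpha> \<in> hom C (Cod C m) (Cod C t) \<longrightarrow> cmp C \<alpha> m = t \<longrightarrow>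
           (\<exists>\<alpha>'. \<alpha>' \<in> hom C (Cod C m) (Cod C t') \<and> cmp C \<alpha>' m = t' \<and>
                  cmp C \<beta> \<alpha>' = \<alpha> \<and>
                  is_pullback C (Id C (Dom C t)) m t' \<alpha>'))"
  proof (rule exI[of _ t'], rule exI[of _ T], intro conjI allI impI)
    show "mono C t'" by fact
    show "T \<in> Arr C" "Dom C t' = Dom C t" "Cod C t' = Dom C T" "Cod C T = Cod C t" "cmp C T t' = t"
      using tt X_def by auto
    fix m \<alpha> assume mm: "mono C m" and dm: "Dom C m = Dom C t"
      and al: "\<alpha> \<in> hom C (Cod C m) (Cod C t)" and am: "cmp C \<alpha> m = t"
    have m: "m \<in> Arr C" using mm unfolding mono_def by blast
    have al': "\<alpha> \<in> Arr C" "Dom C \<alpha> = Cod C m" "Cod C \<alpha> = X" using al X_def by (auto simp: hom_def)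
    let ?M = "(t, m, \<alpha>)"
    have MA: "?M \<in> Arr S" using t al' m dm am X_def S_def by (simp add: slice_simps hom_def)
    have MM: "mono S ?M" using mono_C_imp_slice[OF C mm] MA S_def by blast
    let ?f = "(t, Id C (Dom C t), t)"
    have fA: "?f \<in> hom S (Dom S ?M) t"
      using t idt cat_facts(4)[OF C t] X_def S_def by (simp add: slice_simps hom_def)
    obtain \<chi> where chi: "\<chi> \<in> hom S (Cod S ?M) T" and pb: "is_pullback S ?f ?M \<eta> \<chi>"
      using cls[OF MM fA] by blast
    obtain c1 \<alpha>' c3 where cd: "\<chi> = (c1, \<alpha>', c3)" by (cases \<chi>) auto
    have aa: "c1 = \<alpha>" "c3 = T" "\<alpha>' \<in> Arr C" "Dom C \<alpha>' = Cod C m" "Cod C \<alpha>' = Dom C T"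
       "cmp C T \<alpha>' = \<alpha>"
      using chi cd al' S_def by (auto simp: hom_def slice_simps)
    have sq: "cmp S \<eta> ?f = cmp S \<chi> ?M" using pb unfolding is_pullback_def by blast
    have am': "cmp C \<alpha>' m = t'" using sq ed ab cd aa t'id S_def by (simp add: slice_simps)
    have univ: "\<And>q1 q2. q1\<in>Arr S \<Longrightarrow> q2\<in>Arr S \<Longrightarrow> Dom S q1 = Dom S q2 \<Longrightarrow> Cod S q1 = Dom S \<eta> \<Longrightarrow>
        Cod S q2 = Dom S \<chi> \<Longrightarrow> cmp S \<eta> q1 = cmp S \<chi> q2 \<Longrightarrow>
        (\<exists>u. u \<in> hom S (Dom S q1) (Dom S ?f) \<and> cmp S ?f u = q1 \<and> cmp S ?M u = q2)"
      using pb unfolding is_pullback_def by blast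
    show "\<exists>\<alpha>'. \<alpha>' \<in> hom C (Cod C m) (Cod C t') \<and> cmp C \<alpha>' m = t' \<and>
                  cmp C T \<alpha>' = \<alpha> \<and>
                  is_pullback C (Id C (Dom C t)) m t' \<alpha>'"
    proof (rule exI[of _ \<alpha>'], intro conjI)
    show "\<alpha>' \<in> hom C (Cod C m) (Cod C t')" using aa tt by (simp add: hom_def)
    show "cmp C \<alpha>' m = t'" by fact
    show "cmp C T \<alpha>' = \<alpha>" using aa by simp
    show "is_pullback C (Id C (Dom C t)) m t' \<alpha>'"
      unfolding is_pullback_def
    proof (intro conjI ballI impI)
      show "Id C (Dom C t) \<in> Arr C" "m \<in> Arr C" "t' \<in> Arr C" "\<alpha>' \<in> Arr C"
        using idt m tt aa by auto
      show "Dom C (Id C (Dom C t)) = Dom C m" "Cod C (Id C (Dom C t)) = Dom C t'"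
        "Cod C m = Dom C \<alpha>'" "Cod C t' = Cod C \<alpha>'"
        "cmp C t' (Id C (Dom C t)) = cmp C \<alpha>' m"
        using idt dm tt aa t'id am' by auto
      fix q1 q2 assume q1: "q1 \<in> Arr C" and q2: "q2 \<in> Arr C" and dq: "Dom C q1 = Dom C q2"
        and cq1: "Cod C q1 = Dom C t'" and cq2: "Cod C q2 = Dom C \<alpha>'"
        and eq: "cmp C t' q1 = cmp C \<alpha>' q2"
      define z where "z = cmp C t q1"
      have z: "z \<in> Arr C" "Dom C z = Dom C q1" "Cod C z = X"
        using cat_facts(3)[OF C q1 t] cq1 tt z_def X_def by auto
      have zq2: "cmp C \<alpha> q2 = z"
      proof -
        have "cmp C \<alpha> q2 = cmp C (cmp C T \<alpha>') q2" using aa by simp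
        also have "\<dots> = cmp C T (cmp C \<alpha>' q2)"
          using cat_facts(5)[OF C q2 aa(3) tt(1)] cq2 aa by simp
        also have "\<dots> = cmp C T (cmp C t' q1)" using eq by simp
        also have "\<dots> = cmp C (cmp C T t') q1"
          using cat_facts(5)[OF C q1 tt(3) tt(1)] cq1 tt by simp
        finally show ?thesis using tt z_def by simp
      qed
      let ?Q1 = "(z, q1, t)" and ?Q2 = "(z, q2, \<alpha>)"
      have Q1: "?Q1 \<in> Arr S" using z t q1 cq1 tt X_def S_def z_def by (simp add: slice_simps hom_def)
      have Q2: "?Q2 \<in> Arr S" using z al' q2 cq2 aa dq zq2 S_def by (simp add: slice_simps hom_def)
      have "\<exists>u. u \<in> hom S (Dom S ?Q1) (Dom S ?f) \<and> cmp S ?f u = ?Q1 \<and> cmp S ?M u = ?Q2"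
        apply (rule univ[OF Q1 Q2])
        using ed ab cd aa eq S_def by (simp_all add: slice_simps)
      then obtain u where u: "u \<in> hom S (Dom S ?Q1) (Dom S ?f)" and u1: "cmp S ?f u = ?Q1"
        and u2: "cmp S ?M u = ?Q2" by blast
      obtain u1 u0 u3 where ud: "u = (u1, u0, u3)" by (cases u) auto
      have u0: "u0 \<in> Arr C" "Cod C u0 = Dom C t"
        using u ud S_def by (auto simp: slice_simps hom_def)
      have "cmp C (Id C (Dom C t)) u0 = u0" using cat_facts(4)[OF C u0(1)] u0 by simp
      moreover have "cmp C (Id C (Dom C t)) u0 = q1" using u1 ud S_def by (simp add: slice_simps)
      moreover have "cmp C m u0 = q2" using u2 ud S_def by (simp add: slice_simps)
      ultimately have mq: "cmp C m q1 = q2" by simp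
      have idq: "cmp C (Id C (Dom C t)) q1 = q1" using cat_facts(4)[OF C q1] cq1 tt by simp
      show "\<exists>!u. u \<in> hom C (Dom C q1) (Dom C (Id C (Dom C t))) \<and> cmp C (Id C (Dom C t)) u = q1 \<and> cmp C m u = q2"
      proof (rule ex1I[of _ q1])
        show "q1 \<in> hom C (Dom C q1) (Dom C (Id C (Dom C t))) \<and> cmp C (Id C (Dom C t)) q1 = q1 \<and> cmp C m q1 = q2"
          using q1 cq1 tt idt idq mq by (simp add: hom_def)
      next
        fix v assume v: "v \<in> hom C (Dom C q1) (Dom C (Id C (Dom C t))) \<and> cmp C (Id C (Dom C t)) v = q1 \<and> cmp C m v = q2"
        hence "v \<in> Arr C" "Cod C v = Dom C t" using idt by (auto simp: hom_def)
        hence "cmp C (Id C (Dom C t)) v = v" using cat_facts(4)[OF C, of v] by simp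
        thus "v = q1" using v by simp
      qed
    qed
    qed
  qed
qed

end
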